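(* Let $0<\delta<\frac12$, let $f\in\mathrm{Diff}_+^{1,\delta}(I)$, and let $G\subseteq\mathrm{Diff}_0^3(I)$ satisfy condition (a): there exists $c>0$ such that for all $g_1\ne g_2$ in $G$, $\sup_{t\in[0,1]}|\log(g_1'(t))-\log(g_2'(t))|\ge c$. Then for every $C>0$ the set $\{g\in G: p_\delta(g\circ f)\le C\}$ is finite.
   Context: $I=[0,1]$. $\mathrm{Diff}_+^1(I)$ is the set of $C^1$ diffeomorphisms of $I$ fixing $0$ and $1$; $\mathrm{Diff}_+^{1,\delta}(I)$ is the set of $f\in\mathrm{Diff}_+^1(I)$ with $f'$ Hölder of exponent $\delta$. $\mathrm{Diff}_0^3(I)$ is the set of $C^3$ diffeomorphisms $f$ of $I$ fixing $0$ and $1$ with $f'(0)=f'(1)=1$. For $f\in\mathrm{Diff}_+^{1,\delta}(I)$, $p_\delta(f)=|\log(f'(0))|+\sup_{t_1\ne t_2\in I}\frac{|\log(f'(t_2))-\log(f'(t_1))|}{|t_2-t_1|^\delta}$. *)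

theory Defs
  imports "HOL-Analysis.Analysis"
begin

abbreviation I01 :: "real set" where "I01 \<equiv> {0..1}"

definition dI :: "(real \<Rightarrow> real) \<Rightarrow> real \<Rightarrow> real" where
  "dI f t = vector_derivative f (at t within I01)"

fun nderI :: "nat \<Rightarrow> (real \<Rightarrow> real) \<Rightarrow> real \<Rightarrow> real" where
  "nderI 0 f = f"
| "nderI (Suc n) f = dI (nderI n f)"

definition Ck_on_I :: "nat \<Rightarrow> (real \<Rightarrow> real) \<Rightarrow> bool" where
  "Ck_on_I k f \<longleftrightarrow>
     (\<forall>j<k. \<forall>t\<in>I01. (nderI j f) differentiable (at t within I01))
     \<and> continuous_on I01 (nderI k f)"

definition Diff1p :: "(real \<Rightarrow> real) set" where
  "Diff1p = {f. bij_betw f I01 I01 \<and> f 0 = 0 \<and> f 1 = 1 \<and>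
                Ck_on_I 1 f \<and> Ck_on_I 1 (inv_into I01 f)}"

definition Diff1d :: "real \<Rightarrow> (real \<Rightarrow> real) set" where
  "Diff1d \<delta> = {f \<in> Diff1p. \<exists>K. \<forall>s\<in>I01. \<forall>t\<in>I01.
                  \<bar>dI f s - dI f t\<bar> \<le> K * \<bar>s - t\<bar> powr \<delta>}"

definition Diff03 :: "(real \<Rightarrow> real) set" where
  "Diff03 = {f. bij_betw f I01 I01 \<and> f 0 = 0 \<and> f 1 = 1 \<and>
                Ck_on_I 3 f \<and> Ck_on_I 3 (inv_into I01 f) \<and>
                dI f 0 = 1 \<and> dI f 1 = 1}"

definition p_delta :: "real \<Rightarrow> (real \<Rightarrow> real) \<Rightarrow> real" where
  "p_delta \<delta> f = \<bar>ln (dI f 0)\<bar> +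
     (SUP p\<in>{(t1, t2). t1 \<in> I01 \<and> t2 \<in> I01 \<and> t1 \<noteq> t2}.
        \<bar>ln (dI f (snd p)) - ln (dI f (fst p))\<bar> / \<bar>snd p - fst p\<bar> powr \<delta>)"

end

theory Submission
  imports Defs
begin

lemma dI_has:
  assumes "f differentiable (at t within I01)"
  shows "(f has_vector_derivative dI f t) (at t within I01)"
  using assms vector_derivative_works unfolding dI_def by blast

lemma dI_unique:
  assumes "t \<in> I01" "(f has_vector_derivative D) (at t within I01)"
  shows "dI f t = D"
  using vector_derivative_within_cbox[of 0 1 t f D] assms unfolding dI_def
  by (simp add: cbox_interval)

lemma Ck_D:
  assumes "Ck_on_I k f" "1 \<le> k" "t \<in> I01"
  shows "(f has_vector_derivative dI f t) (at t within I01)"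
proof -
  have "(nderI 0 f) differentiable (at t within I01)"
    using assms unfolding Ck_on_I_def by auto
  then show ?thesis using dI_has by simp
qed

lemma Ck1_cont:
  assumes "Ck_on_I 1 f" shows "continuous_on I01 (dI f)"
  using assms unfolding Ck_on_I_def by simp

lemma Ck3_D2:
  assumes "Ck_on_I 3 f" "t \<in> I01"
  shows "(dI f has_vector_derivative dI (dI f) t) (at t within I01)"
proof -
  have "\<forall>j<3. \<forall>t\<in>I01. nderI j f differentiable (at t within I01)"
    using assms unfolding Ck_on_I_def by blast
  then have "(nderI 1 f) differentiable (at t within I01)"
    using assms(2) by (metis one_less_numeral_iff semiring_norm(77))
  then show ?thesis using dI_has by simp
qed

lemma Ck3_cont2:
  assumes "Ck_on_I 3 f" shows "continuous_on I01 (dI (dI f))"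
proof -
  have "\<forall>t\<in>I01. (nderI 2 f) differentiable (at t within I01)"
    using assms unfolding Ck_on_I_def by auto
  then have "continuous_on I01 (nderI 2 f)"
    using continuous_on_eq_continuous_within differentiable_imp_continuous_within by blast
  then show ?thesis by (simp add: numeral_2_eq_2)
qed

lemma Ck3_Ck1:
  assumes "Ck_on_I 3 f" shows "Ck_on_I 1 f"
proof -
  have A: "\<forall>j<3. \<forall>t\<in>I01. nderI j f differentiable (at t within I01)"
    using assms unfolding Ck_on_I_def by blast
  then have "\<forall>t\<in>I01. (nderI 1 f) differentiable (at t within I01)"
    by (metis one_less_numeral_iff semiring_norm(77))
  then have "continuous_on I01 (nderI 1 f)"
    using continuous_on_eq_continuous_within differentiable_imp_continuous_within by blast
  moreover have "\<forall>j<1. \<forall>t\<in>I01. nderI j f differentiable (at t within I01)"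
    using A by (metis less_one zero_less_numeral)
  ultimately show ?thesis unfolding Ck_on_I_def by blast
qed

lemma lipschitz_from_deriv:
  fixes h h' :: "real \<Rightarrow> real"
  assumes "\<And>t. t \<in> I01 \<Longrightarrow> (h has_vector_derivative h' t) (at t within I01)"
    and "\<And>t. t \<in> I01 \<Longrightarrow> \<bar>h' t\<bar> \<le> M"
    and "x \<in> I01" "y \<in> I01"
  shows "\<bar>h x - h y\<bar> \<le> M * \<bar>x - y\<bar>"
proof -
  have main: "\<bar>h b - h a\<bar> \<le> M * (b - a)" if "a \<le> b" "a \<in> I01" "b \<in> I01" for a b
  proof -
    have "\<exists>z\<in>{a..b}. h b - h a = (\<lambda>u. u * h' z) (b - a)"
    proof (rule mvt_very_simple[OF \<open>a \<le> b\<close>])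
      fix z assume "a \<le> z" "z \<le> b"
      then have "z \<in> I01" "{a..b} \<subseteq> I01" using that by auto
      then have "(h has_vector_derivative h' z) (at z within {a..b})"
        using assms(1) has_vector_derivative_within_subset by blast
      then show "(h has_derivative (\<lambda>u. u * h' z)) (at z within {a..b})"
        unfolding has_vector_derivative_def by simp
    qed
    then obtain z where z: "z \<in> {a..b}" "h b - h a = (b - a) * h' z" by auto
    then have "z \<in> I01" using that by auto
    have "\<bar>h b - h a\<bar> = (b - a) * \<bar>h' z\<bar>" using z that by (simp add: abs_mult)
    also have "\<dots> \<le> (b - a) * M" using assms(2)[OF \<open>z \<in> I01\<close>] that by (simp add: mult_left_mono)
    finally show ?thesis by (simp add: mult.commute)
  qed
  show ?thesis
  proof (cases "x \<le> y")
    case True then show ?thesis using main[of x y] assms by (simp add: abs_minus_commute)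
  next
    case False then show ?thesis using main[of y x] assms by simp
  qed
qed

lemma ln_lip:
  fixes a b m :: real
  assumes "0 < m" "m \<le> a" "m \<le> b"
  shows "\<bar>ln a - ln b\<bar> \<le> \<bar>a - b\<bar> / m"
proof -
  have g: "ln x - ln y \<le> \<bar>x - y\<bar> / m" if "m \<le> x" "m \<le> y" for x y
  proof -
    have "ln x - ln y = ln (x / y)" using that assms by (simp add: ln_div)
    also have "\<dots> \<le> x / y - 1" using that assms by (intro ln_le_minus_one) simp
    also have "\<dots> = (x - y) / y" using that assms by (simp add: field_simps)
    also have "\<dots> \<le> \<bar>x - y\<bar> / y" using that assms by (simp add: divide_right_mono)
    also have "\<dots> \<le> \<bar>x - y\<bar> / m" using that assms by (simp add: frac_le)
    finally show ?thesis .
  qed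
  show ?thesis using g[of a b] g[of b a] assms by (simp add: abs_minus_commute)
qed


lemma deriv_pos:
  assumes bij: "bij_betw f I01 I01" and f0: "f 0 = 0" and f1: "f 1 = 1"
    and c1: "Ck_on_I 1 f" and ci: "Ck_on_I 1 (inv_into I01 f)" and t: "t \<in> I01"
  shows "dI f t > 0"
proof -
  have nz: "dI f s \<noteq> 0" if s: "s \<in> I01" for s
  proof -
    let ?g = "inv_into I01 f"
    have fs: "f s \<in> I01" using bij_betw_apply[OF bij s] .
    have img: "f ` I01 = I01" using bij by (simp add: bij_betw_def)
    have d1: "(f has_vector_derivative dI f s) (at s within I01)" using Ck_D[OF c1 _ s] by simp
    have d2: "(?g has_vector_derivative dI ?g (f s)) (at (f s) within f ` I01)"
      unfolding img using Ck_D[OF ci _ fs] by simp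
    have D: "((?g \<circ> f) has_vector_derivative (dI f s *\<^sub>R dI ?g (f s))) (at s within I01)"
      using vector_diff_chain_within[OF d1 d2] .
    have E: "\<And>x. x\<in>I01 \<Longrightarrow> id x = (?g \<circ> f) x"
      using bij by (simp add: bij_betw_def inv_into_f_f)
    have "(id has_vector_derivative (dI f s *\<^sub>R dI ?g (f s))) (at s within I01)"
      by (rule has_vector_derivative_transform[OF s E D])
    then have "dI id s = dI f s * dI ?g (f s)" using dI_unique[OF s] by simp
    moreover have "dI id s = 1" using dI_unique[OF s] has_vector_derivative_id[of "at s within I01"]
      by (simp add: id_def)
    ultimately show ?thesis by auto
  qed
  have "\<exists>z\<in>{0..1}. f 1 - f 0 = (\<lambda>u. u * dI f z) (1 - 0)"
  proof (rule mvt_very_simple)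
    fix z :: real assume "0 \<le> z" "z \<le> 1"
    then show "(f has_derivative (\<lambda>u. u * dI f z)) (at z within {0..1})"
      using Ck_D[OF c1] unfolding has_vector_derivative_def by simp
  qed simp
  then obtain z where z: "z \<in> I01" "dI f z = 1" using f0 f1 by auto
  have cont: "continuous_on I01 (dI f)" using Ck1_cont[OF c1] .
  show ?thesis
  proof (rule ccontr)
    assume "\<not> dI f t > 0"
    then have le: "dI f t \<le> 0" by simp
    show False
    proof (cases "t \<le> z")
      case True
      have "continuous_on {t..z} (dI f)" using t z by (intro continuous_on_subset[OF cont]) auto
      moreover have "dI f z \<ge> 0" using z by simp
      ultimately obtain x where "t \<le> x" "x \<le> z" "dI f x = 0" using IVT'[of "dI f" t 0 z, OF le _ True] by blast
      then show False using nz[of x] t z by auto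
    next
      case False
      have "continuous_on {z..t} (dI f)" using t z by (intro continuous_on_subset[OF cont]) auto
      moreover have "dI f z \<ge> 0" using z by simp
      moreover have "z \<le> t" using False by simp
      ultimately obtain x where "z \<le> x" "x \<le> t" "dI f x = 0" using IVT2'[of "dI f" t 0 z, OF le] by blast
      then show False using nz[of x] t z by auto
    qed
  qed
qed


lemma count_lemma:
  fixes H :: "'a \<Rightarrow> real \<Rightarrow> real" and S :: "'a set"
  assumes c: "c > 0" and dl: "0 < \<delta>" and A: "A \<ge> 0"
    and H0: "\<And>g. g \<in> S \<Longrightarrow> H g 0 = 0"
    and Hh: "\<And>g s t. g \<in> S \<Longrightarrow> s \<in> I01 \<Longrightarrow> t \<in> I01 \<Longrightarrow> \<bar>H g s - H g t\<bar> \<le> A * \<bar>s - t\<bar> powr \<delta>"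
    and sep: "\<And>g1 g2. g1 \<in> S \<Longrightarrow> g2 \<in> S \<Longrightarrow> (\<forall>s\<in>I01. \<bar>H g1 s - H g2 s\<bar> \<le> 3 * c / 4) \<Longrightarrow> g1 = g2"
  shows "finite S"
proof -
  define e where "e = c / 4"
  have e: "e > 0" using c e_def by simp
  define r where "r = (c / (4 * (A + 1))) powr (1 / \<delta>)"
  have cpos: "c / (4 * (A + 1)) > 0" using c A by simp
  have r: "r > 0" using cpos r_def c A by simp
  obtain N :: nat where N: "1 / r < real N" using reals_Archimedean2 by blast
  have Npos: "real N > 0" using N r by (smt (verit) divide_pos_pos)
  have Nr: "1 / real N < r" using N r Npos by (simp add: field_simps)
  have "(1 / real N) powr \<delta> \<le> r powr \<delta>"
    using Nr Npos dl by (intro powr_mono2) auto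
  also have "r powr \<delta> = c / (4 * (A + 1))"
    unfolding r_def using cpos dl c A by (simp add: powr_powr)
  finally have Np: "(1 / real N) powr \<delta> \<le> c / (4 * (A + 1))" .
  have AN: "A * (1 / real N) powr \<delta> \<le> e"
  proof -
    have "A * (1 / real N) powr \<delta> \<le> A * (c / (4 * (A + 1)))"
      using Np A by (intro mult_left_mono) auto
    also have "\<dots> \<le> c / 4" using A c by (simp add: field_simps)
    finally show ?thesis unfolding e_def .
  qed
  have Hbd: "\<bar>H g x\<bar> \<le> A" if "g \<in> S" "x \<in> I01" for g x
  proof -
    have "\<bar>H g x - H g 0\<bar> \<le> A * \<bar>x - 0\<bar> powr \<delta>" using Hh[OF that(1) that(2), of 0] by simp
    moreover have "\<bar>x - 0\<bar> powr \<delta> \<le> 1" using that(2) dl by (simp add: powr_le_one_le powr_le1)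
    ultimately show ?thesis using H0[OF that(1)] A by (smt (verit) mult_left_le)
  qed
  define R where "R = \<lceil>A / e\<rceil>"
  define \<phi> where "\<phi> g = map (\<lambda>i. \<lfloor>H g (real i / real N) / e\<rfloor>) [0..<N+1]" for g
  have xi: "real i / real N \<in> I01" if "i < N + 1" for i
    using that Npos by (auto simp: field_simps)
  have "\<phi> ` S \<subseteq> {xs. set xs \<subseteq> {-R..R} \<and> length xs = N + 1}"
  proof safe
    fix g assume g: "g \<in> S"
    show "length (\<phi> g) = N + 1" unfolding \<phi>_def by simp
    fix z assume "z \<in> set (\<phi> g)"
    then obtain i where i: "i < N + 1" "z = \<lfloor>H g (real i / real N) / e\<rfloor>" unfolding \<phi>_def set_map set_upt by auto
    have b: "\<bar>H g (real i / real N)\<bar> \<le> A" using Hbd[OF g xi[OF i(1)]] .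
    have "H g (real i / real N) / e \<le> A / e" using b e by (simp add: divide_right_mono)
    then have "real_of_int z \<le> real_of_int R"
      using of_int_floor_le[of "H g (real i / real N) / e"] le_of_int_ceiling[of "A / e"]
      unfolding R_def i(2) by linarith
    then have zR: "z \<le> R" by simp
    have "- (A / e) \<le> H g (real i / real N) / e" using b e by (simp add: field_simps)
    then have "\<lfloor>- (A / e)\<rfloor> \<le> z" unfolding i(2) by (rule floor_mono)
    moreover have "- R = \<lfloor>- (A / e)\<rfloor>" unfolding R_def ceiling_def by simp
    ultimately have "- R \<le> z" by simp
    with zR show "z \<in> {-R..R}" by simp
  qed
  moreover have "finite {xs. set xs \<subseteq> {-R..R} \<and> length xs = N + 1}"
    by (rule finite_lists_length_eq) simp
  ultimately have fin: "finite (\<phi> ` S)" by (rule finite_subset)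
  have "inj_on \<phi> S"
  proof (rule inj_onI)
    fix g1 g2 assume g1: "g1 \<in> S" and g2: "g2 \<in> S" and eq: "\<phi> g1 = \<phi> g2"
    have fe: "\<lfloor>H g1 (real i / real N) / e\<rfloor> = \<lfloor>H g2 (real i / real N) / e\<rfloor>" if "i < N + 1" for i
      using eq that unfolding \<phi>_def map_eq_conv set_upt by simp
    have close: "\<bar>H g1 (real i / real N) - H g2 (real i / real N)\<bar> \<le> e" if "i < N + 1" for i
    proof -
      let ?a = "H g1 (real i / real N) / e" and ?b = "H g2 (real i / real N) / e"
      have "\<bar>?a - ?b\<bar> \<le> 1" using fe[OF that] floor_correct[of ?a] floor_correct[of ?b]
        by linarith
      then have "\<bar>?a - ?b\<bar> * e \<le> e" using e by simp
      moreover have "\<bar>?a - ?b\<bar> * e = \<bar>H g1 (real i / real N) - H g2 (real i / real N)\<bar>"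
        using e by (simp add: diff_divide_distrib[symmetric] abs_divide)
      ultimately show ?thesis by simp
    qed
    show "g1 = g2"
    proof (rule sep[OF g1 g2], intro ballI)
      fix s assume s: "s \<in> I01"
      define i where "i = nat \<lfloor>s * real N\<rfloor>"
      have sN: "0 \<le> s * real N" using s Npos by simp
      have i1: "real i \<le> s * real N" unfolding i_def using sN by simp
      have i2: "s * real N < real i + 1" unfolding i_def using sN by linarith
      have iN: "i < N + 1"
      proof -
        have "s * real N \<le> real N" using s Npos by (simp add: mult_left_le_one_le)
        then have "real i \<le> real N" using i1 by linarith
        then show ?thesis by simp
      qed
      let ?x = "real i / real N"
      have d: "\<bar>s - ?x\<bar> \<le> 1 / real N"
      proof -
        have "?x \<le> s" using i1 Npos by (simp add: field_simps)
        moreover have "s < ?x + 1 / real N" using i2 Npos by (simp add: field_simps)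
        ultimately show ?thesis by simp
      qed
      have pw: "\<bar>s - ?x\<bar> powr \<delta> \<le> (1 / real N) powr \<delta>" using d dl by (intro powr_mono2) auto
      have h1: "\<bar>H g s - H g ?x\<bar> \<le> e" if "g \<in> S" for g
      proof -
        have "\<bar>H g s - H g ?x\<bar> \<le> A * \<bar>s - ?x\<bar> powr \<delta>" using Hh[OF that s xi[OF iN]] .
        also have "\<dots> \<le> A * (1 / real N) powr \<delta>" using pw A by (intro mult_left_mono) auto
        finally show ?thesis using AN by simp
      qed
      have "\<bar>H g1 s - H g2 s\<bar> \<le> \<bar>H g1 s - H g1 ?x\<bar> + \<bar>H g1 ?x - H g2 ?x\<bar> + \<bar>H g2 ?x - H g2 s\<bar>"
        by simp
      also have "\<dots> \<le> e + e + e" using h1[OF g1] h1[OF g2] close[OF iN] by (simp add: abs_minus_commute)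
      finally show "\<bar>H g1 s - H g2 s\<bar> \<le> 3 * c / 4" unfolding e_def by simp
    qed
  qed
  then show ?thesis using fin finite_imageD by blast
qed


lemma pos_min:
  fixes h :: "real \<Rightarrow> real"
  assumes "continuous_on I01 h" "\<And>t. t \<in> I01 \<Longrightarrow> h t > 0"
  shows "\<exists>m>0. \<forall>t\<in>I01. m \<le> h t"
proof -
  obtain x where x: "x \<in> I01" "\<forall>y\<in>I01. h x \<le> h y"
    using continuous_attains_inf[OF compact_Icc _ assms(1)] by auto
  then show ?thesis using assms(2)[OF x(1)] by blast
qed

lemma abs_bound:
  fixes h :: "real \<Rightarrow> real"
  assumes "continuous_on I01 h"
  shows "\<exists>M\<ge>0. \<forall>t\<in>I01. \<bar>h t\<bar> \<le> M"
proof -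
  obtain x where x: "x \<in> I01" "\<forall>y\<in>I01. \<bar>h y\<bar> \<le> \<bar>h x\<bar>"
    using continuous_attains_sup[OF compact_Icc _ continuous_on_rabs[OF assms(1)]] by auto
  then show ?thesis by (intro exI[of _ "\<bar>h x\<bar>"]) auto
qed

lemma chain_dI:
  assumes f: "f \<in> Diff1p" and g: "Ck_on_I 1 g" and t: "t \<in> I01"
  shows "dI (g \<circ> f) t = dI g (f t) * dI f t"
proof -
  have bij: "bij_betw f I01 I01" and c1: "Ck_on_I 1 f" using f unfolding Diff1p_def by auto
  have fs: "f t \<in> I01" using bij_betw_apply[OF bij t] .
  have img: "f ` I01 = I01" using bij by (simp add: bij_betw_def)
  have d1: "(f has_vector_derivative dI f t) (at t within I01)" using Ck_D[OF c1 _ t] by simp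
  have d2: "(g has_vector_derivative dI g (f t)) (at (f t) within f ` I01)"
    unfolding img using Ck_D[OF g _ fs] by simp
  have "((g \<circ> f) has_vector_derivative (dI f t *\<^sub>R dI g (f t))) (at t within I01)"
    using vector_diff_chain_within[OF d1 d2] .
  then show ?thesis using dI_unique[OF t] by (simp add: mult.commute)
qed

lemma key:
  assumes dl: "0 < \<delta>" "\<delta> < 1" and f: "f \<in> Diff1d \<delta>"
  shows "\<exists>L\<ge>0. \<forall>g\<in>Diff03. \<forall>C. p_delta \<delta> (g \<circ> f) \<le> C \<longrightarrow>
           (\<forall>s\<in>I01. \<forall>t\<in>I01. \<bar>ln (dI g (f s)) - ln (dI g (f t))\<bar> \<le> (C + L) * \<bar>s - t\<bar> powr \<delta>)"
proof -
  have fD: "f \<in> Diff1p" using f unfolding Diff1d_def by auto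
  obtain K where K: "\<And>s t. s \<in> I01 \<Longrightarrow> t \<in> I01 \<Longrightarrow> \<bar>dI f s - dI f t\<bar> \<le> K * \<bar>s - t\<bar> powr \<delta>"
    using f unfolding Diff1d_def by blast
  have bij: "bij_betw f I01 I01" and f0: "f 0 = 0" and f1: "f 1 = 1"
    and c1: "Ck_on_I 1 f" and ci: "Ck_on_I 1 (inv_into I01 f)"
    using fD unfolding Diff1p_def by auto
  have fpos: "\<And>t. t \<in> I01 \<Longrightarrow> dI f t > 0" using deriv_pos[OF bij f0 f1 c1 ci] by blast
  have fcont: "continuous_on I01 (dI f)" using Ck1_cont[OF c1] .
  obtain mf where mf: "mf > 0" "\<And>t. t \<in> I01 \<Longrightarrow> mf \<le> dI f t"
    using pos_min[OF fcont fpos] by blast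
  define L where "L = \<bar>K\<bar> / mf"
  have L0: "L \<ge> 0" unfolding L_def using mf by simp
  have lnf: "\<bar>ln (dI f s) - ln (dI f t)\<bar> \<le> L * \<bar>s - t\<bar> powr \<delta>" if "s \<in> I01" "t \<in> I01" for s t
  proof -
    have "\<bar>ln (dI f s) - ln (dI f t)\<bar> \<le> \<bar>dI f s - dI f t\<bar> / mf"
      using ln_lip[OF mf(1) mf(2)[OF that(1)] mf(2)[OF that(2)]] .
    also have "\<dots> \<le> (\<bar>K\<bar> * \<bar>s - t\<bar> powr \<delta>) / mf"
    proof (rule divide_right_mono)
      show "\<bar>dI f s - dI f t\<bar> \<le> \<bar>K\<bar> * \<bar>s - t\<bar> powr \<delta>"
        using K[OF that] mult_right_mono[OF abs_ge_self[of K] powr_ge_zero[of "\<bar>s-t\<bar>" \<delta>]] by linarith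
    qed (use mf in simp)
    finally show ?thesis unfolding L_def by simp
  qed
  obtain Lf where Lf: "Lf \<ge> 0" "\<And>t. t \<in> I01 \<Longrightarrow> \<bar>dI f t\<bar> \<le> Lf"
    using abs_bound[OF fcont] by blast
  have flip: "\<bar>f x - f y\<bar> \<le> Lf * \<bar>x - y\<bar>" if "x \<in> I01" "y \<in> I01" for x y
    using lipschitz_from_deriv[of f "dI f" Lf x y] Ck_D[OF c1] Lf that by auto
  have fI: "\<And>t. t \<in> I01 \<Longrightarrow> f t \<in> I01" using bij_betw_apply[OF bij] by simp
  show ?thesis
  proof (intro exI[of _ L] conjI L0 ballI allI impI)
    fix g C assume g: "g \<in> Diff03" and pC: "p_delta \<delta> (g \<circ> f) \<le> C"
    have gbij: "bij_betw g I01 I01" and g0: "g 0 = 0" and g1: "g 1 = 1"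
      and gc3: "Ck_on_I 3 g" and gci3: "Ck_on_I 3 (inv_into I01 g)"
      using g unfolding Diff03_def by auto
    have gc1: "Ck_on_I 1 g" using Ck3_Ck1[OF gc3] .
    have gpos: "\<And>t. t \<in> I01 \<Longrightarrow> dI g t > 0"
      using deriv_pos[OF gbij g0 g1 gc1 Ck3_Ck1[OF gci3]] by blast
    obtain mg where mg: "mg > 0" "\<And>t. t \<in> I01 \<Longrightarrow> mg \<le> dI g t"
      using pos_min[OF Ck1_cont[OF gc1] gpos] by blast
    obtain Mg where Mg: "Mg \<ge> 0" "\<And>t. t \<in> I01 \<Longrightarrow> \<bar>dI (dI g) t\<bar> \<le> Mg"
      using abs_bound[OF Ck3_cont2[OF gc3]] by blast
    have glip: "\<bar>dI g x - dI g y\<bar> \<le> Mg * \<bar>x - y\<bar>" if "x \<in> I01" "y \<in> I01" for x y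
      using lipschitz_from_deriv[of "dI g" "dI (dI g)" Mg x y] Ck3_D2[OF gc3] Mg that by auto
    define H where "H s = ln (dI g (f s))" for s
    define B where "B = Mg * Lf / mg"
    have B0: "B \<ge> 0" unfolding B_def using Mg Lf mg by simp
    have HB: "\<bar>H s - H t\<bar> \<le> B * \<bar>s - t\<bar> powr \<delta>" if st: "s \<in> I01" "t \<in> I01" for s t
    proof (cases "s = t")
      case True then show ?thesis by simp
    next
      case False
      have "\<bar>H s - H t\<bar> \<le> \<bar>dI g (f s) - dI g (f t)\<bar> / mg"
        unfolding H_def using ln_lip[OF mg(1) mg(2)[OF fI[OF st(1)]] mg(2)[OF fI[OF st(2)]]] .
      also have "\<dots> \<le> (Mg * (Lf * \<bar>s - t\<bar>)) / mg"
      proof (intro divide_right_mono)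
        have "\<bar>dI g (f s) - dI g (f t)\<bar> \<le> Mg * \<bar>f s - f t\<bar>" using glip fI st by blast
        also have "\<dots> \<le> Mg * (Lf * \<bar>s - t\<bar>)" using flip[OF st] Mg(1) by (rule mult_left_mono)
        finally show "\<bar>dI g (f s) - dI g (f t)\<bar> \<le> Mg * (Lf * \<bar>s - t\<bar>)" .
      qed (use mg in simp)
      also have "\<dots> = B * \<bar>s - t\<bar>" unfolding B_def by simp
      also have "\<dots> \<le> B * \<bar>s - t\<bar> powr \<delta>"
      proof (intro mult_left_mono B0)
        have pos: "0 < \<bar>s - t\<bar>" using False by simp
        have le1: "\<bar>s - t\<bar> \<le> 1" using st by auto
        have "\<bar>s - t\<bar> powr 1 \<le> \<bar>s - t\<bar> powr \<delta>"
          using powr_mono_both'[of \<delta> 1 "\<bar>s - t\<bar>" "\<bar>s - t\<bar>"] dl pos le1 by simp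
        then show "\<bar>s - t\<bar> \<le> \<bar>s - t\<bar> powr \<delta>" using pos by simp
      qed
      finally show ?thesis .
    qed
    have lnc: "ln (dI (g \<circ> f) t) = H t + ln (dI f t)" if "t \<in> I01" for t
      unfolding chain_dI[OF fD gc1 that] H_def
      using gpos[OF fI[OF that]] fpos[OF that] by (simp add: ln_mult)
    define P where "P = {(t1, t2). t1 \<in> I01 \<and> t2 \<in> I01 \<and> t1 \<noteq> t2}"
    define Q where "Q p = \<bar>ln (dI (g \<circ> f) (snd p)) - ln (dI (g \<circ> f) (fst p))\<bar> / \<bar>snd p - fst p\<bar> powr \<delta>" for p :: "real \<times> real"
    have comb: "\<bar>ln (dI (g \<circ> f) s) - ln (dI (g \<circ> f) t)\<bar> = \<bar>(H s - H t) + (ln (dI f s) - ln (dI f t))\<bar>"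
      if "s \<in> I01" "t \<in> I01" for s t
      using lnc[OF that(1)] lnc[OF that(2)] by simp
    have "bdd_above (Q ` P)"
    proof (rule bdd_aboveI2)
      fix p assume "p \<in> P"
      then obtain t1 t2 where p: "p = (t1, t2)" "t1 \<in> I01" "t2 \<in> I01" "t1 \<noteq> t2" unfolding P_def by auto
      have dpos: "\<bar>t2 - t1\<bar> powr \<delta> > 0" using p by simp
      have "\<bar>ln (dI (g \<circ> f) t2) - ln (dI (g \<circ> f) t1)\<bar> \<le> B * \<bar>t2 - t1\<bar> powr \<delta> + L * \<bar>t2 - t1\<bar> powr \<delta>"
        unfolding comb[OF p(3) p(2)] using HB[OF p(3) p(2)] lnf[OF p(3) p(2)] by linarith
      then have "\<bar>ln (dI (g \<circ> f) t2) - ln (dI (g \<circ> f) t1)\<bar> \<le> (B + L) * \<bar>t2 - t1\<bar> powr \<delta>"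
        by (simp add: distrib_right)
      then show "Q p \<le> B + L" unfolding Q_def p(1) using dpos by (simp add: divide_le_eq)
    qed
    then have Qle: "Q p \<le> C" if "p \<in> P" for p
    proof -
      have "Q p \<le> Sup (Q ` P)" using cSUP_upper[OF that \<open>bdd_above (Q ` P)\<close>] .
      moreover have "p_delta \<delta> (g \<circ> f) = \<bar>ln (dI (g \<circ> f) 0)\<bar> + Sup (Q ` P)"
        unfolding p_delta_def P_def Q_def by simp
      ultimately show ?thesis using pC by linarith
    qed
    fix s t assume s: "s \<in> I01" and t: "t \<in> I01"
    show "\<bar>ln (dI g (f s)) - ln (dI g (f t))\<bar> \<le> (C + L) * \<bar>s - t\<bar> powr \<delta>"
    proof (cases "s = t")
      case True then show ?thesis by simp
    next
      case False
      have "(t, s) \<in> P" unfolding P_def using s t False by auto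
      then have "Q (t, s) \<le> C" by (rule Qle)
      moreover have dpos: "\<bar>s - t\<bar> powr \<delta> > 0" using False by simp
      ultimately have c1: "\<bar>ln (dI (g \<circ> f) s) - ln (dI (g \<circ> f) t)\<bar> \<le> C * \<bar>s - t\<bar> powr \<delta>"
        unfolding Q_def by (simp add: divide_le_eq)
      have "\<bar>H s - H t\<bar> \<le> \<bar>ln (dI (g \<circ> f) s) - ln (dI (g \<circ> f) t)\<bar> + \<bar>ln (dI f s) - ln (dI f t)\<bar>"
        unfolding comb[OF s t] by linarith
      also have "\<dots> \<le> C * \<bar>s - t\<bar> powr \<delta> + L * \<bar>s - t\<bar> powr \<delta>" using c1 lnf[OF s t] by linarith
      finally show ?thesis unfolding H_def by (simp add: distrib_right)
    qed
  qed
qed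


theorem mainTheorem15:
  fixes \<delta> :: real and f :: "real \<Rightarrow> real" and G :: "(real \<Rightarrow> real) set"
  assumes "0 < \<delta>" and "\<delta> < 1/2"
    and "f \<in> Diff1d \<delta>"
    and "G \<subseteq> Diff03"
    and "\<exists>c>0. \<forall>g1\<in>G. \<forall>g2\<in>G. g1 \<noteq> g2 \<longrightarrow>
            (SUP t\<in>I01. \<bar>ln (dI g1 t) - ln (dI g2 t)\<bar>) \<ge> c"
  shows "\<forall>C>0. finite {g \<in> G. p_delta \<delta> (g \<circ> f) \<le> C}"
proof (intro allI impI)
  fix C :: real assume C: "C > 0"
  obtain c where c: "c > 0" and csep: "\<And>g1 g2. g1 \<in> G \<Longrightarrow> g2 \<in> G \<Longrightarrow> g1 \<noteq> g2 \<Longrightarrow>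
            (SUP t\<in>I01. \<bar>ln (dI g1 t) - ln (dI g2 t)\<bar>) \<ge> c"
    using assms(5) by blast
  have d1: "\<delta> < 1" using assms(2) by simp
  obtain L where L: "L \<ge> 0" and LH: "\<And>g C s t. g \<in> Diff03 \<Longrightarrow> p_delta \<delta> (g \<circ> f) \<le> C \<Longrightarrow>
           s \<in> I01 \<Longrightarrow> t \<in> I01 \<Longrightarrow> \<bar>ln (dI g (f s)) - ln (dI g (f t))\<bar> \<le> (C + L) * \<bar>s - t\<bar> powr \<delta>"
    using key[OF assms(1) d1 assms(3)] by blast
  have fD: "f \<in> Diff1p" using assms(3) unfolding Diff1d_def by auto
  have bij: "bij_betw f I01 I01" and f0: "f 0 = 0" using fD unfolding Diff1p_def by auto
  have img: "f ` I01 = I01" using bij by (simp add: bij_betw_def)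
  let ?S = "{g \<in> G. p_delta \<delta> (g \<circ> f) \<le> C}"
  show "finite ?S"
  proof (rule count_lemma[where H = "\<lambda>g s. ln (dI g (f s))" and c = c and \<delta> = \<delta> and A = "C + L"])
    show "0 < c" using c .
    show "0 < \<delta>" using assms(1) .
    show "0 \<le> C + L" using C L by simp
  next
    fix g assume "g \<in> ?S"
    then have "g \<in> Diff03" using assms(4) by auto
    then have "dI g 0 = 1" unfolding Diff03_def by auto
    then show "ln (dI g (f 0)) = 0" using f0 by simp
  next
    fix g s t assume "g \<in> ?S" "s \<in> I01" "t \<in> I01"
    then show "\<bar>ln (dI g (f s)) - ln (dI g (f t))\<bar> \<le> (C + L) * \<bar>s - t\<bar> powr \<delta>"
      using LH assms(4) by blast
  next
    fix g1 g2 assume g1: "g1 \<in> ?S" and g2: "g2 \<in> ?S"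
      and cl: "\<forall>s\<in>I01. \<bar>ln (dI g1 (f s)) - ln (dI g2 (f s))\<bar> \<le> 3 * c / 4"
    show "g1 = g2"
    proof (rule ccontr)
      assume ne: "g1 \<noteq> g2"
      have "(SUP t\<in>I01. \<bar>ln (dI g1 t) - ln (dI g2 t)\<bar>) \<le> 3 * c / 4"
      proof (rule cSUP_least)
        show "I01 \<noteq> {}" by simp
        fix u assume "u \<in> I01"
        then obtain s where "s \<in> I01" "u = f s" using img by blast
        then show "\<bar>ln (dI g1 u) - ln (dI g2 u)\<bar> \<le> 3 * c / 4" using cl by blast
      qed
      moreover have "(SUP t\<in>I01. \<bar>ln (dI g1 t) - ln (dI g2 t)\<bar>) \<ge> c"
        using csep g1 g2 ne by blast
      ultimately show False using c by linarith
    qed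
  qed
qed

end
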